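(* Let $(X_t)_{t\ge1}$ be i.i.d. real random variables on $(\Omega,\mathcal{F},\mathbb{P})$ with mean $\mu$, whose cumulant-generating function $\phi(\lambda)=\log\mathbb{E}[\exp(\lambda X_1)]$ is finite on an open interval $]\lambda_1,\lambda_2[$ containing $0$. Define for $x\in\mathbb{R}$ \[d(x,\mu)=\sup_{\lambda\in]\lambda_1,\lambda_2[}\{\lambda x-\phi(\lambda)\}.\] Let $(\mathcal{F}_t)_{t\ge0}$ be an increasing sequence of sub-$\sigma$-fields with $\sigma(X_1,\dots,X_t)\subset\mathcal{F}_t$ and $X_s$ independent of $\mathcal{F}_t$ for $s>t$, and let $(\epsilon_t)_{t\ge1}$ be $\{0,1\}$-valued with $\epsilon_t$ $\mathcal{F}_{t-1}$-measurable. For an integer $n\ge2$ let $S(n)=\sum_{s=1}^n\epsilon_sX_s$, $N(n)=\sum_{s=1}^n\epsilon_s$, $\hat\mu(n)=S(n)/N(n)$. Then for every $\delta>0$, \[\mathbb{P}\big(N(n)\ge1,\ \hat\mu(n)<\mu,\ N(n)\,d(\hat\mu(n),\mu)>\delta\big)\le e\lceil\delta\log(n)\rceil\exp(-\delta).\] *)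

theory Defs
  imports "HOL-Probability.Probability"
begin

definition cgf :: "'a measure \<Rightarrow> ('a \<Rightarrow> real) \<Rightarrow> real \<Rightarrow> real" where
  "cgf M Y l = ln (integral\<^sup>L M (\<lambda>\<omega>. exp (l * Y \<omega>)))"

definition cramer_d :: "'a measure \<Rightarrow> ('a \<Rightarrow> real) \<Rightarrow> real \<Rightarrow> real \<Rightarrow> real \<Rightarrow> ereal" where
  "cramer_d M Y l1 l2 x = (SUP l\<in>{l1<..<l2}. ereal (l * x - cgf M Y l))"

end

theory Submission imports Defs begin

locale kl_setup = prob_space M
  for M :: "'a measure" +
  fixes X :: "nat \<Rightarrow> 'a \<Rightarrow> real" and F :: "nat \<Rightarrow> 'a measure" and eps :: "nat \<Rightarrow> 'a \<Rightarrow> real"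
  assumes rv: "\<And>t. t \<ge> 1 \<Longrightarrow> X t \<in> borel_measurable M"
    and ident: "\<And>t. t \<ge> 1 \<Longrightarrow> distr M borel (X t) = distr M borel (X 1)"
    and sub: "\<And>t. subalgebra M (F t)"
    and mono: "\<And>s t. s \<le> t \<Longrightarrow> sets (F s) \<subseteq> sets (F t)"
    and adapt: "\<And>s t. 1 \<le> s \<Longrightarrow> s \<le> t \<Longrightarrow> X s \<in> borel_measurable (F t)"
    and indepF: "\<And>s t. t < s \<Longrightarrow>
        indep_set (sets (F t)) (sets (vimage_algebra (space M) (X s) borel))"
    and eps01: "\<And>t \<omega>. t \<ge> 1 \<Longrightarrow> \<omega> \<in> space M \<Longrightarrow> eps t \<omega> \<in> {0, 1}"
    and eps_pred: "\<And>t. t \<ge> 1 \<Longrightarrow> eps t \<in> borel_measurable (F (t - 1))"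
begin

lemma space_F: "space (F t) = space M"
  using sub[of t] by (simp add: subalgebra_def)

lemma meas_up: assumes "s \<le> t" "f \<in> borel_measurable (F s)" shows "f \<in> borel_measurable (F t)"
proof -
  have "subalgebra (F t) (F s)" using mono[OF assms(1)] by (simp add: subalgebra_def space_F)
  then show ?thesis using measurable_from_subalg assms(2) by blast
qed

lemma meas_M: assumes "f \<in> borel_measurable (F s)" shows "f \<in> borel_measurable M"
  using measurable_from_subalg[OF sub assms] .

lemma indep_FX:
  assumes G: "G \<in> borel_measurable (F m)" and g: "g \<in> borel_measurable borel"
  shows "indep_var borel G borel (\<lambda>\<omega>. g (X (Suc m) \<omega>))"
proof -
  have XM: "X (Suc m) \<in> borel_measurable M" using rv by simp
  have H: "(\<lambda>\<omega>. g (X (Suc m) \<omega>)) \<in> borel_measurable (vimage_algebra (space M) (X (Suc m)) borel)"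
    using measurable_compose[OF measurable_vimage_algebra1 g, of "X (Suc m)" "space M"]
    by (simp add: o_def)
  have i: "indep_set (sets (F m)) (sets (vimage_algebra (space M) (X (Suc m)) borel))"
    using indepF by simp
  have s1: "sigma_sets (space M) {G -` A \<inter> space M | A. A \<in> sets borel} \<subseteq> sets (F m)"
    using sets.sigma_sets_subset[of "{G -` A \<inter> space M | A. A \<in> sets borel}" "F m"]
      measurable_sets[OF G] space_F by auto
  have s2: "sigma_sets (space M) {(\<lambda>\<omega>. g (X (Suc m) \<omega>)) -` A \<inter> space M | A. A \<in> sets borel}
      \<subseteq> sets (vimage_algebra (space M) (X (Suc m)) borel)"
    using sets.sigma_sets_subset[of "{(\<lambda>\<omega>. g (X (Suc m) \<omega>)) -` A \<inter> space M | A. A \<in> sets borel}"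
        "vimage_algebra (space M) (X (Suc m)) borel"]
      measurable_sets[OF H] by auto
  have "indep_set (sigma_sets (space M) {G -` A \<inter> space M | A. A \<in> sets borel})
     (sigma_sets (space M) {(\<lambda>\<omega>. g (X (Suc m) \<omega>)) -` A \<inter> space M | A. A \<in> sets borel})"
    using i unfolding indep_set_def
    by (rule indep_sets_mono_sets) (use s1 s2 in \<open>auto split: bool.split\<close>)
  moreover have "random_variable borel G" using meas_M[OF G] .
  moreover have "random_variable borel (\<lambda>\<omega>. g (X (Suc m) \<omega>))" using XM g by measurable
  ultimately show ?thesis by (simp add: indep_var_eq)
qed

lemma exp_Suc:
  assumes int: "integrable M (\<lambda>\<omega>. exp (lam * X 1 \<omega>))"
  shows "integrable M (\<lambda>\<omega>. exp (lam * X (Suc m) \<omega>))"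
    "(\<integral>\<omega>. exp (lam * X (Suc m) \<omega>) \<partial>M) = (\<integral>\<omega>. exp (lam * X 1 \<omega>) \<partial>M)"
proof -
  have m1: "X 1 \<in> measurable M borel" "X (Suc m) \<in> measurable M borel" using rv by auto
  have f: "(\<lambda>x. exp (lam * x)) \<in> borel_measurable borel" by measurable
  have d: "distr M borel (X (Suc m)) = distr M borel (X 1)" by (rule ident) simp
  have "integrable (distr M borel (X 1)) (\<lambda>x. exp (lam * x))"
    using integrable_distr_eq[OF m1(1) f] int by simp
  then show "integrable M (\<lambda>\<omega>. exp (lam * X (Suc m) \<omega>))"
    using integrable_distr_eq[OF m1(2) f] d by simp
  show "(\<integral>\<omega>. exp (lam * X (Suc m) \<omega>) \<partial>M) = (\<integral>\<omega>. exp (lam * X 1 \<omega>) \<partial>M)"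
    using integral_distr[OF m1(1) f] integral_distr[OF m1(2) f] d by simp
qed

lemma W_prop:
  assumes int: "integrable M (\<lambda>\<omega>. exp (lam * X 1 \<omega>))"
    and pos: "(\<integral>\<omega>. exp (lam * X 1 \<omega>) \<partial>M) > 0"
  defines "W \<equiv> \<lambda>m \<omega>. exp (\<Sum>s\<in>{1..m}. eps s \<omega> * (lam * X s \<omega> - ln (\<integral>\<omega>. exp (lam * X 1 \<omega>) \<partial>M)))"
  shows "W m \<in> borel_measurable (F m) \<and> integrable M (W m) \<and> integral\<^sup>L M (W m) = 1"
proof (induction m)
  case 0
  then show ?case by (simp add: W_def prob_space)
next
  case (Suc m)
  define \<Phi> where "\<Phi> = (\<integral>\<omega>. exp (lam * X 1 \<omega>) \<partial>M)"
  have IH: "W m \<in> borel_measurable (F m)" "integrable M (W m)" "integral\<^sup>L M (W m) = 1"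
    using Suc by auto
  have Wm: "W m \<in> borel_measurable (F (Suc m))" using meas_up[OF _ IH(1)] by simp
  have e: "eps (Suc m) \<in> borel_measurable (F m)" using eps_pred[of "Suc m"] by simp
  have e2: "eps (Suc m) \<in> borel_measurable (F (Suc m))" using meas_up[OF _ e] by simp
  have x2: "X (Suc m) \<in> borel_measurable (F (Suc m))" using adapt by simp
  have WS: "W (Suc m) = (\<lambda>\<omega>. W m \<omega> * exp (eps (Suc m) \<omega> * (lam * X (Suc m) \<omega> - ln \<Phi>)))"
    by (simp add: W_def \<Phi>_def atLeastAtMostSuc_conv exp_add mult.commute)
  have meas: "W (Suc m) \<in> borel_measurable (F (Suc m))"
    unfolding WS using Wm e2 x2 by measurable
  define G where "G = (\<lambda>\<omega>. W m \<omega> * eps (Suc m) \<omega>)"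
  define H where "H = (\<lambda>\<omega>. exp (lam * X (Suc m) \<omega>))"
  have Gm: "G \<in> borel_measurable (F m)" unfolding G_def using IH(1) e by measurable
  have ind: "indep_var borel G borel H"
    unfolding H_def by (rule indep_FX[OF Gm]) measurable
  have WmM: "W m \<in> borel_measurable M" using meas_M[OF IH(1)] .
  have eM: "eps (Suc m) \<in> borel_measurable M" using meas_M[OF e] .
  have epsb: "\<And>\<omega>. \<omega> \<in> space M \<Longrightarrow> eps (Suc m) \<omega> \<in> {0,1}" using eps01 by simp
  have intG: "integrable M G"
    unfolding G_def
    by (rule Bochner_Integration.integrable_bound[OF IH(2)])
      (use WmM eM in \<open>auto intro!: AE_I2 simp: abs_mult dest!: epsb\<close>)
  have int1: "integrable M (\<lambda>\<omega>. W m \<omega> * (1 - eps (Suc m) \<omega>))"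
    by (rule Bochner_Integration.integrable_bound[OF IH(2)])
      (use WmM eM in \<open>auto intro!: AE_I2 simp: abs_mult dest!: epsb\<close>)
  have intH: "integrable M H" "integral\<^sup>L M H = \<Phi>"
    using exp_Suc[OF int, of m] by (simp_all add: H_def \<Phi>_def)
  have GH: "integrable M (\<lambda>\<omega>. G \<omega> * H \<omega>)" "(\<integral>\<omega>. G \<omega> * H \<omega> \<partial>M) = integral\<^sup>L M G * \<Phi>"
    using indep_var_integrable[OF ind intG intH(1)] indep_var_lebesgue_integral[OF ind intG intH(1)] intH(2)
    by auto
  have \<Phi>pos: "\<Phi> > 0" using pos by (simp add: \<Phi>_def)
  have eq: "W (Suc m) \<omega> = W m \<omega> * (1 - eps (Suc m) \<omega>) + G \<omega> * H \<omega> / \<Phi>" if "\<omega> \<in> space M" for \<omega>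
  proof -
    have "exp (lam * X (Suc m) \<omega> - ln \<Phi>) = H \<omega> / \<Phi>"
      using \<Phi>pos by (simp add: H_def exp_diff)
    then show ?thesis using epsb[OF that] unfolding WS G_def by auto
  qed
  have int2: "integrable M (\<lambda>\<omega>. W m \<omega> * (1 - eps (Suc m) \<omega>) + G \<omega> * H \<omega> / \<Phi>)"
    using int1 GH(1) by auto
  have intS: "integrable M (W (Suc m))"
    using int2 by (rule Bochner_Integration.integrable_cong[THEN iffD1, rotated -1]) (auto simp: eq)
  have "integral\<^sup>L M (W (Suc m)) = (\<integral>\<omega>. W m \<omega> * (1 - eps (Suc m) \<omega>) + G \<omega> * H \<omega> / \<Phi> \<partial>M)"
    by (rule Bochner_Integration.integral_cong) (auto simp: eq)
  also have "\<dots> = (\<integral>\<omega>. W m \<omega> * (1 - eps (Suc m) \<omega>) \<partial>M) + integral\<^sup>L M G"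
    using int1 GH \<Phi>pos by simp
  also have "\<dots> = (\<integral>\<omega>. W m \<omega> * (1 - eps (Suc m) \<omega>) + G \<omega> \<partial>M)"
    using int1 intG by simp
  also have "\<dots> = integral\<^sup>L M (W m)"
    by (rule Bochner_Integration.integral_cong) (auto simp: G_def algebra_simps)
  finally show ?case using IH(3) meas intS by simp
qed

end

lemma (in prob_space) jensen_exp:
  fixes Y :: "'a \<Rightarrow> real" and lam :: real
  assumes "integrable M Y" "integrable M (\<lambda>\<omega>. exp (lam * Y \<omega>))"
  shows "exp (lam * integral\<^sup>L M Y) \<le> (\<integral>\<omega>. exp (lam * Y \<omega>) \<partial>M)"
proof -
  define m where "m = integral\<^sup>L M Y"
  have pt: "exp (lam * m) * (1 + (lam * Y \<omega> - lam * m)) \<le> exp (lam * Y \<omega>)" for \<omega>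
  proof -
    have "exp (lam * m) * (1 + (lam * Y \<omega> - lam * m)) \<le> exp (lam * m) * exp (lam * Y \<omega> - lam * m)"
      using exp_ge_add_one_self[of "lam * Y \<omega> - lam * m"] by (intro mult_left_mono) auto
    also have "\<dots> = exp (lam * Y \<omega>)" by (simp add: exp_diff)
    finally show ?thesis .
  qed
  have "(\<integral>\<omega>. exp (lam * m) * (1 + (lam * Y \<omega> - lam * m)) \<partial>M) \<le> (\<integral>\<omega>. exp (lam * Y \<omega>) \<partial>M)"
    by (rule integral_mono) (use assms pt in auto)
  moreover have "(\<integral>\<omega>. exp (lam * m) * (1 + (lam * Y \<omega> - lam * m)) \<partial>M) = exp (lam * m)"
    using assms(1) by (simp add: m_def prob_space algebra_simps)
  ultimately show ?thesis by (simp add: m_def)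
qed

lemma sup_choice:
  fixes \<phi> :: "real \<Rightarrow> real"
  assumes l1: "l1 < 0" and c: "0 < c" "c' < c"
    and jen: "\<And>l. l \<in> {l1<..<l2} \<Longrightarrow> l * \<mu> \<le> \<phi> l"
    and A: "A = {x. x < \<mu> \<and> (\<exists>l\<in>{l1<..<l2}. l * x - \<phi> l > c)}" and ne: "A \<noteq> {}"
  shows "\<exists>l\<in>{l1<..<l2}. \<forall>x\<in>A. l * x - \<phi> l > c'"
proof -
  have bdd: "bdd_above A" unfolding A by (auto intro!: bdd_aboveI[of _ \<mu>])
  define z where "z = Sup A"
  define e where "e = (c - c') / (- l1)"
  have e: "e > 0" using c l1 by (simp add: e_def divide_pos_neg)
  have "z - e < z" using e by simp
  then obtain x where x: "x \<in> A" "z - e < x" using less_cSup_iff[OF ne bdd] unfolding z_def by auto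
  then obtain l where l: "l \<in> {l1<..<l2}" "l * x - \<phi> l > c" "x < \<mu>" unfolding A by auto
  have lneg: "l < 0"
  proof (rule ccontr)
    assume "\<not> l < 0"
    then have "l * x \<le> l * \<mu>" using l(3) by (intro mult_left_mono) auto
    then show False using jen[OF l(1)] l(2) c by linarith
  qed
  have xz: "x \<le> z" using cSup_upper[OF x(1) bdd] z_def by simp
  have zx0: "z - x < (c - c') / (- l1)" using x(2) e_def by simp
  have zx: "(z - x) * (- l1) < c - c'" using zx0 pos_less_divide_eq[of "-l1" "z-x" "c-c'"] l1 by simp
  have "(-l) * (z - x) \<le> (-l1) * (z - x)" using l(1) xz by (intro mult_right_mono) auto
  then have key: "l * z > l * x - (c - c')" using zx by (simp add: algebra_simps)
  show ?thesis
  proof (intro bexI[OF _ l(1)] ballI)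
    fix y assume "y \<in> A"
    then have "y \<le> z" using cSup_upper[OF _ bdd] z_def by simp
    then have "l * z \<le> l * y" using lneg by (intro mult_left_mono_neg) auto
    then show "l * y - \<phi> l > c'" using key l(2) by linarith
  qed
qed

lemma ereal_step:
  fixes N \<delta> :: real
  assumes "N > 0" "ereal N * (SUP l\<in>L. ereal (f l)) > ereal \<delta>"
  shows "\<exists>l\<in>L. \<delta> / N < f l"
proof -
  have "(SUP l\<in>L. ereal (f l)) > ereal (\<delta> / N)"
  proof (rule ccontr)
    assume "\<not> ?thesis"
    then have "ereal N * (SUP l\<in>L. ereal (f l)) \<le> ereal N * ereal (\<delta> / N)"
      by (intro ereal_mult_left_mono) (use assms in auto)
    then show False using assms by simp
  qed
  then show ?thesis by (auto simp: less_SUP_iff)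
qed

theorem theorem4:
  fixes M :: "'a measure" and X :: "nat \<Rightarrow> 'a \<Rightarrow> real" and F :: "nat \<Rightarrow> 'a measure"
    and eps :: "nat \<Rightarrow> 'a \<Rightarrow> real"
    and \<mu> l1 l2 \<delta> :: real and n :: nat
  assumes P: "prob_space M"
    and rv: "\<And>t. t \<ge> 1 \<Longrightarrow> X t \<in> borel_measurable M"
    and indep: "prob_space.indep_vars M (\<lambda>_. borel) X {1..}"
    and ident: "\<And>t. t \<ge> 1 \<Longrightarrow> distr M borel (X t) = distr M borel (X 1)"
    and int1: "integrable M (X 1)"
    and mean: "integral\<^sup>L M (X 1) = \<mu>"
    and l_int: "l1 < 0" "0 < l2"
    and cgf_fin: "\<And>l. l \<in> {l1<..<l2} \<Longrightarrow> integrable M (\<lambda>\<omega>. exp (l * X 1 \<omega>))"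
    and sub: "\<And>t. subalgebra M (F t)"
    and mono: "\<And>s t. s \<le> t \<Longrightarrow> sets (F s) \<subseteq> sets (F t)"
    and adapt: "\<And>s t. 1 \<le> s \<Longrightarrow> s \<le> t \<Longrightarrow> X s \<in> borel_measurable (F t)"
    and indepF: "\<And>s t. t < s \<Longrightarrow>
        prob_space.indep_set M (sets (F t)) (sets (vimage_algebra (space M) (X s) borel))"
    and eps01: "\<And>t \<omega>. t \<ge> 1 \<Longrightarrow> \<omega> \<in> space M \<Longrightarrow> eps t \<omega> \<in> {0, 1}"
    and eps_pred: "\<And>t. t \<ge> 1 \<Longrightarrow> eps t \<in> borel_measurable (F (t - 1))"
    and n: "n \<ge> 2"
    and \<delta>: "\<delta> > 0"
  shows "measure M {\<omega> \<in> space M.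
            let S = (\<Sum>s=1..n. eps s \<omega> * X s \<omega>);
                N = (\<Sum>s=1..n. eps s \<omega>);
                muhat = S / N
            in N \<ge> 1 \<and> muhat < \<mu> \<and> ereal N * cramer_d M (X 1) l1 l2 muhat > ereal \<delta>}
         \<le> exp 1 * real_of_int \<lceil>\<delta> * ln (real n)\<rceil> * exp (- \<delta>)"
proof -
  interpret kl_setup M X F eps
    unfolding kl_setup_def kl_setup_axioms_def using P rv ident sub mono adapt indepF eps01 eps_pred by blast
  define \<phi> where "\<phi> = cgf M (X 1)"
  define S where "S = (\<lambda>\<omega>. \<Sum>s=1..n. eps s \<omega> * X s \<omega>)"
  define N where "N = (\<lambda>\<omega>. \<Sum>s=1..n. eps s \<omega>)"
  define E where "E = {\<omega> \<in> space M.
            let S = (\<Sum>s=1..n. eps s \<omega> * X s \<omega>);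
                N = (\<Sum>s=1..n. eps s \<omega>);
                muhat = S / N
            in N \<ge> 1 \<and> muhat < \<mu> \<and> ereal N * cramer_d M (X 1) l1 l2 muhat > ereal \<delta>}"
  have E_alt: "E = {\<omega> \<in> space M. N \<omega> \<ge> 1 \<and> S \<omega> / N \<omega> < \<mu> \<and>
        ereal (N \<omega>) * (SUP l\<in>{l1<..<l2}. ereal (l * (S \<omega> / N \<omega>) - \<phi> l)) > ereal \<delta>}"
    by (simp add: E_def S_def N_def Let_def cramer_d_def \<phi>_def)
  have jen: "l * \<mu> \<le> \<phi> l" if "l \<in> {l1<..<l2}" for l
  proof -
    have "exp (l * \<mu>) \<le> (\<integral>\<omega>. exp (l * X 1 \<omega>) \<partial>M)"
      using jensen_exp[OF int1 cgf_fin[OF that]] mean by simp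
    then show ?thesis unfolding \<phi>_def cgf_def
      using ln_le_cancel_iff[of "exp (l * \<mu>)"] by (metis exp_gt_zero ln_exp ln_mono order_less_le_trans)
  qed
  have Phipos: "(\<integral>\<omega>. exp (l * X 1 \<omega>) \<partial>M) > 0" if "l \<in> {l1<..<l2}" for l
    using jensen_exp[OF int1 cgf_fin[OF that]] by (meson exp_gt_zero less_le_trans)
  have Nle: "N \<omega> \<le> real n" if "\<omega> \<in> space M" for \<omega>
  proof -
    have "N \<omega> \<le> (\<Sum>s=1..n. 1)" unfolding N_def
      by (rule sum_mono) (use eps01 that in force)
    then show ?thesis by simp
  qed
  have Eprop: "N \<omega> \<ge> 1 \<and> N \<omega> \<le> real n \<and> S \<omega> / N \<omega> < \<mu> \<and>
      (\<exists>l\<in>{l1<..<l2}. \<delta> / N \<omega> < l * (S \<omega> / N \<omega>) - \<phi> l)" if "\<omega> \<in> E" for \<omega>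
    using that ereal_step[of "N \<omega>" \<delta> "\<lambda>l. l * (S \<omega> / N \<omega>) - \<phi> l" "{l1<..<l2}"] Nle
    unfolding E_alt by auto
  have Esub: "E \<subseteq> space M" unfolding E_def by auto
  have RHSpos: "exp 1 * real_of_int \<lceil>\<delta> * ln (real n)\<rceil> * exp (- \<delta>) \<ge> 0"
  proof -
    have "\<delta> * ln (real n) > 0" using \<delta> n by (intro mult_pos_pos) auto
    then show ?thesis by (intro mult_nonneg_nonneg) auto
  qed
  have meas_le: "measure M E \<le> measure M U" if "E \<subseteq> U" "U \<in> sets M" for U
  proof (cases "E \<in> sets M")
    case True then show ?thesis using that finite_measure_mono by blast
  next
    case False then show ?thesis by (simp add: measure_notin_sets)
  qed
  show ?thesis
  proof (cases "\<delta> \<le> 1")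
    case True
    have c1: "real_of_int \<lceil>\<delta> * ln (real n)\<rceil> \<ge> 1"
    proof -
      have "\<delta> * ln (real n) > 0" using \<delta> n by (intro mult_pos_pos) auto
      then have "1 \<le> \<lceil>\<delta> * ln (real n)\<rceil>" by simp
      then show ?thesis by linarith
    qed
    have "exp 1 * exp (- \<delta>) \<ge> 1" using True by (simp add: exp_add[symmetric])
    then have "(exp 1 * exp (- \<delta>)) * real_of_int \<lceil>\<delta> * ln (real n)\<rceil> \<ge> 1 * 1"
      using c1 by (intro mult_mono) auto
    moreover have "(exp 1 * exp (- \<delta>)) * real_of_int \<lceil>\<delta> * ln (real n)\<rceil> = exp 1 * real_of_int \<lceil>\<delta> * ln (real n)\<rceil> * exp (- \<delta>)"
      by (simp only: mult_ac)
    ultimately have "exp 1 * real_of_int \<lceil>\<delta> * ln (real n)\<rceil> * exp (- \<delta>) \<ge> 1" by simp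
    moreover have "measure M E \<le> 1" by simp
    ultimately have "measure M E \<le> exp 1 * real_of_int \<lceil>\<delta> * ln (real n)\<rceil> * exp (- \<delta>)" by linarith
    then show ?thesis unfolding E_def .
  next
    case False
    then have d1: "\<delta> > 1" by simp
    define r where "r = \<delta> / (\<delta> - 1)"
    have r1: "r > 1" using d1 by (simp add: r_def)
    have lnr: "ln r \<ge> 1 / \<delta>"
    proof -
      have "ln (1 / r) \<le> 1 / r - 1" using r1 by (intro ln_le_minus_one) auto
      moreover have "1 / r - 1 = - 1 / \<delta>" using d1 by (simp add: r_def field_simps)
      ultimately show ?thesis using r1 by (simp add: ln_div)
    qed
    have lnrpos: "ln r > 0" using r1 by simp
    define D where "D = nat \<lceil>ln (real n) / ln r\<rceil>"
    have lnn: "ln (real n) > 0" using n by simp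
    have qpos: "0 < ln (real n) / ln r" using lnn lnrpos by simp
    then have "1 \<le> \<lceil>ln (real n) / ln r\<rceil>" by simp
    then have Dge: "D \<ge> 1" unfolding D_def by (simp add: le_nat_iff)
    have DleR: "real D \<le> real_of_int \<lceil>\<delta> * ln (real n)\<rceil>"
    proof -
      have "ln (real n) / ln r \<le> \<delta> * ln (real n)"
      proof -
        have "1 / ln r \<le> \<delta>" using lnr lnrpos d1 by (simp add: field_simps)
        then have "ln (real n) * (1 / ln r) \<le> ln (real n) * \<delta>" using lnn by (intro mult_left_mono) auto
        then show ?thesis by (simp add: mult.commute)
      qed
      then have "\<lceil>ln (real n) / ln r\<rceil> \<le> \<lceil>\<delta> * ln (real n)\<rceil>" by (rule ceiling_mono)
      moreover have "\<lceil>ln (real n) / ln r\<rceil> \<ge> 0" using qpos by simp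
      ultimately show ?thesis unfolding D_def by simp
    qed
    have pow_exp: "r ^ k = exp (real k * ln r)" for k
      using r1 powr_realpow[of r k] by (simp add: powr_def mult.commute)
    define Sl where "Sl = (\<lambda>k. {\<omega>. r ^ (k - 1) \<le> N \<omega> \<and> N \<omega> \<le> r ^ k})"
    have slice: "E \<subseteq> (\<Union>k\<in>{1..D}. E \<inter> Sl k)"
    proof
      fix \<omega> assume w: "\<omega> \<in> E"
      have N1: "N \<omega> \<ge> 1" and Nn: "N \<omega> \<le> real n" using Eprop[OF w] by auto
      show "\<omega> \<in> (\<Union>k\<in>{1..D}. E \<inter> Sl k)"
      proof (cases "N \<omega> \<le> r")
        case True
        then show ?thesis using w N1 Dge by (auto simp: Sl_def intro!: bexI[of _ 1])
      next
        case False
        define q where "q = ln (N \<omega>) / ln r"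
        have "ln (N \<omega>) > ln r" using False r1 by simp
        then have q1: "q > 1" using lnrpos by (simp add: q_def)
        define k where "k = nat \<lceil>q\<rceil>"
        have cq: "1 \<le> \<lceil>q\<rceil>" using q1 by simp
        have kq: "real k = real_of_int \<lceil>q\<rceil>" using cq by (simp add: k_def)
        have k1: "k \<ge> 1" using cq by (simp add: k_def le_nat_iff)
        have "q \<le> ln (real n) / ln r" unfolding q_def using N1 Nn lnrpos
          by (intro divide_right_mono) auto
        then have kD: "k \<le> D" unfolding k_def D_def by (intro nat_mono ceiling_mono)
        have lnN: "N \<omega> = exp (q * ln r)" using N1 lnrpos by (simp add: q_def)
        have "N \<omega> \<le> r ^ k" unfolding pow_exp lnN kq using lnrpos
          by (simp add: mult_right_mono)
        moreover have "r ^ (k - 1) \<le> N \<omega>"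
        proof -
          have "real (k - 1) = real_of_int \<lceil>q\<rceil> - 1" using k1 kq by (simp add: of_nat_diff)
          also have "\<dots> \<le> q" by linarith
          finally show ?thesis unfolding pow_exp lnN using lnrpos by (simp add: mult_right_mono)
        qed
        ultimately show ?thesis using w k1 kD by (auto simp: Sl_def)
      qed
    qed
    have bound: "measure M E \<le> real D * exp (- (\<theta> * \<delta> / r))" if th: "0 < \<theta>" "\<theta> < 1" for \<theta>
    proof -
      have "\<forall>k\<in>{1..D}. \<exists>B. B \<in> sets M \<and> measure M B \<le> exp (- (\<theta> * \<delta> / r)) \<and> E \<inter> Sl k \<subseteq> B"
      proof
        fix k assume k: "k \<in> {1..D}"
        define c where "c = \<delta> / r ^ k"
        have cpos: "c > 0" using \<delta> r1 by (simp add: c_def)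
        define A where "A = {x. x < \<mu> \<and> (\<exists>l\<in>{l1<..<l2}. l * x - \<phi> l > c)}"
        have inA: "S \<omega> / N \<omega> \<in> A \<and> r ^ (k - 1) \<le> N \<omega> \<and> N \<omega> \<ge> 1" if "\<omega> \<in> E \<inter> Sl k" for \<omega>
        proof -
          from that have w: "\<omega> \<in> E" and sl: "r ^ (k - 1) \<le> N \<omega>" "N \<omega> \<le> r ^ k" by (auto simp: Sl_def)
          from Eprop[OF w] obtain l where l: "l \<in> {l1<..<l2}" "\<delta> / N \<omega> < l * (S \<omega> / N \<omega>) - \<phi> l"
            and N1: "N \<omega> \<ge> 1" and mu: "S \<omega> / N \<omega> < \<mu>" by auto
          have "c \<le> \<delta> / N \<omega>" unfolding c_def using sl N1 \<delta> by (intro divide_left_mono) auto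
          then show ?thesis using l mu N1 sl unfolding A_def by force
        qed
        show "\<exists>B. B \<in> sets M \<and> measure M B \<le> exp (- (\<theta> * \<delta> / r)) \<and> E \<inter> Sl k \<subseteq> B"
        proof (cases "A = {}")
          case True
          then show ?thesis using inA by (intro exI[of _ "{}"]) auto
        next
          case False
          have "\<theta> * c < c" using th cpos by simp
          from sup_choice[OF l_int(1) cpos this jen A_def False]
          obtain l where l: "l \<in> {l1<..<l2}" "\<And>x. x \<in> A \<Longrightarrow> l * x - \<phi> l > \<theta> * c" by auto
          define W where "W = (\<lambda>\<omega>. exp (\<Sum>s\<in>{1..n}. eps s \<omega> * (l * X s \<omega> - ln (\<integral>\<omega>. exp (l * X 1 \<omega>) \<partial>M))))"
          have Wp: "W \<in> borel_measurable (F n) \<and> integrable M W \<and> integral\<^sup>L M W = 1"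
            using W_prop[OF cgf_fin[OF l(1)] Phipos[OF l(1)], of n] unfolding W_def by simp
          define a where "a = r ^ (k - 1) * (\<theta> * c)"
          have a: "a = \<theta> * \<delta> / r"
          proof -
            have "r ^ k = r * r ^ (k - 1)" using k by (metis Suc_diff_1 atLeastAtMost_iff less_le_trans power_Suc zero_less_one)
            then show ?thesis using r1 by (simp add: a_def c_def field_simps)
          qed
          define B where "B = {\<omega> \<in> space M. W \<omega> \<ge> exp a}"
          have WM[measurable]: "W \<in> borel_measurable M" using meas_M[of W n] Wp by blast
          have Bm: "B \<in> sets M" unfolding B_def by measurable
          have Wint: "integrable M W" using Wp by blast
          have Wnn: "AE x in M. 0 \<le> W x" unfolding W_def by (intro AE_I2) simp
          have "measure M B \<le> integral\<^sup>L M W / exp a"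
            unfolding B_def by (rule integral_Markov_inequality_measure[OF Wint sets.top Wnn exp_gt_zero])
          also have "\<dots> = exp (- (\<theta> * \<delta> / r))" using Wp a by (simp add: exp_minus field_simps)
          finally have mB: "measure M B \<le> exp (- (\<theta> * \<delta> / r))" .
          have "E \<inter> Sl k \<subseteq> B"
          proof
            fix \<omega> assume w: "\<omega> \<in> E \<inter> Sl k"
            from inA[OF w] have A1: "S \<omega> / N \<omega> \<in> A" and sl: "r ^ (k - 1) \<le> N \<omega>" and N1: "N \<omega> \<ge> 1" by auto
            have gt: "l * (S \<omega> / N \<omega>) - \<phi> l > \<theta> * c" using l(2)[OF A1] .
            have sumeq: "(\<Sum>s\<in>{1..n}. eps s \<omega> * (l * X s \<omega> - \<phi> l)) = N \<omega> * (l * (S \<omega> / N \<omega>) - \<phi> l)"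
            proof -
              have Nne: "N \<omega> \<noteq> 0" using N1 by simp
              have 1: "N \<omega> * (l * (S \<omega> / N \<omega>) - \<phi> l) = l * S \<omega> - \<phi> l * N \<omega>"
                using Nne by (simp add: field_simps)
              have 2: "(\<Sum>s\<in>{1..n}. eps s \<omega> * (l * X s \<omega> - \<phi> l)) = l * S \<omega> - \<phi> l * N \<omega>"
                unfolding S_def N_def sum_distrib_left sum_subtractf[symmetric]
                by (intro sum.cong) (auto simp: algebra_simps)
              show ?thesis using 1 2 by simp
            qed
            have "a \<le> N \<omega> * (\<theta> * c)" unfolding a_def using sl th cpos by (intro mult_right_mono) auto
            also have "\<dots> \<le> N \<omega> * (l * (S \<omega> / N \<omega>) - \<phi> l)" using gt N1 by (intro mult_left_mono) auto
            finally have "a \<le> (\<Sum>s\<in>{1..n}. eps s \<omega> * (l * X s \<omega> - \<phi> l))" using sumeq by simp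
            then have "exp a \<le> W \<omega>" unfolding W_def \<phi>_def cgf_def by simp
            then show "\<omega> \<in> B" using w Esub unfolding B_def by auto
          qed
          then show ?thesis using Bm mB by blast
        qed
      qed
      then obtain B where B: "\<And>k. k \<in> {1..D} \<Longrightarrow> B k \<in> sets M \<and> measure M (B k) \<le> exp (- (\<theta> * \<delta> / r)) \<and> E \<inter> Sl k \<subseteq> B k"
        by metis
      have "E \<subseteq> (\<Union>k\<in>{1..D}. B k)" using slice B by blast
      then have "measure M E \<le> measure M (\<Union>k\<in>{1..D}. B k)" using B by (intro meas_le) auto
      also have "\<dots> \<le> (\<Sum>k\<in>{1..D}. measure M (B k))" using B by (intro measure_UNION_le) auto
      also have "\<dots> \<le> (\<Sum>k\<in>{1..D}. exp (- (\<theta> * \<delta> / r)))" using B by (intro sum_mono) auto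
      finally show ?thesis by simp
    qed
    have lim: "((\<lambda>\<theta>. real D * exp (- (\<theta> * \<delta> / r))) \<longlongrightarrow> real D * exp (- (1 * \<delta> / r))) (at_left 1)"
      using r1 by (intro tendsto_intros) auto
    have ev: "eventually (\<lambda>\<theta>. measure M E \<le> real D * exp (- (\<theta> * \<delta> / r))) (at_left (1::real))"
      using eventually_at_left_real[OF zero_less_one] by (rule eventually_mono) (use bound in auto)
    have "measure M E \<le> real D * exp (- (1 * \<delta> / r))"
      by (rule tendsto_lowerbound[OF lim ev]) simp
    also have "- (1 * \<delta> / r) = 1 + - \<delta>" using d1 by (simp add: r_def field_simps)
    also have "real D * exp (1 + - \<delta>) = exp 1 * real D * exp (- \<delta>)" by (simp add: exp_add[symmetric])
    also have "\<dots> \<le> exp 1 * real_of_int \<lceil>\<delta> * ln (real n)\<rceil> * exp (- \<delta>)"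
      using DleR by (intro mult_right_mono mult_left_mono) auto
    finally show ?thesis unfolding E_def .
  qed
qed

end
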